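(* Let $0<|q|<1$, let $m$ be a nonnegative integer, and let $a,b,c,d$ be complex numbers such that all denominators below are nonzero and $|cq^{-m}/(ab)|<1$. Then \[ {}_3\phi_2\!\left[\begin{matrix}a,b,dq^m\\ c,d\end{matrix};q,\frac{cq^{-m}}{ab}\right]= \frac{(c/a;q)_\infty(c/b;q)_\infty}{(c;q)_\infty(c/ab;q)_\infty}\, {}_3\phi_2\!\left[\begin{matrix}a,b,q^{-m}\\ abq/c,d\end{matrix};q,q\right]. \]
   Context: For $0<|q|<1$: $(a;q)_\infty=\prod_{j\ge0}(1-aq^j)$ and $(a;q)_k=(a;q)_\infty/(aq^k;q)_\infty$ for integers $k$. The basic hypergeometric series is ${}_r\phi_{r-1}\!\left[\begin{matrix}a_1,\dots,a_r\\ b_1,\dots,b_{r-1}\end{matrix};q,z\right]=\sum_{k\ge0}\frac{(a_1;q)_k\cdots(a_r;q)_k}{(q;q)_k(b_1;q)_k\cdots(b_{r-1};q)_k}z^k$ (it terminates if some numerator parameter equals $q^{-n}$, $n$ a nonnegative integer). *)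

theory Defs
  imports "HOL-Analysis.Analysis"
begin

definition qpoch_inf :: "complex \<Rightarrow> complex \<Rightarrow> complex" where
  "qpoch_inf a q = (\<Prod>j. (1 - a * q ^ j))"

definition qpoch :: "complex \<Rightarrow> complex \<Rightarrow> nat \<Rightarrow> complex" where
  "qpoch a q k = (\<Prod>j<k. (1 - a * q ^ j))"

definition qphi :: "complex list \<Rightarrow> complex list \<Rightarrow> complex \<Rightarrow> complex \<Rightarrow> complex" where
  "qphi as bs q z =
     (\<Sum>k. (\<Prod>a\<leftarrow>as. qpoch a q k) / (qpoch q q k * (\<Prod>b\<leftarrow>bs. qpoch b q k)) * z ^ k)"

end

theory Submission
  imports Defs
begin

lemma qpoch_Suc: "qpoch a q (Suc n) = qpoch a q n * (1 - a * q ^ n)"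
  by (simp add: qpoch_def)

lemma qpoch_0[simp]: "qpoch a q 0 = 1"
  by (simp add: qpoch_def)

lemma qpoch_add: "qpoch a q (n + k) = qpoch a q n * qpoch (a * q ^ n) q k"
  by (induction k) (simp_all add: qpoch_Suc power_add mult_ac)

lemma qpoch_Suc_shift: "qpoch a q (Suc n) = (1 - a) * qpoch (a * q) q n"
  using qpoch_add[of a q 1 n] by (simp add: qpoch_def)

lemma norm_qpoch_le:
  fixes q :: complex assumes "norm q < 1"
  shows "norm (qpoch a q n) \<le> exp (norm a / (1 - norm q))"
proof -
  have "norm (qpoch a q n) \<le> (\<Prod>j<n. norm (1 - a * q ^ j))"
    unfolding qpoch_def by (rule norm_prod_le)
  also have "\<dots> \<le> (\<Prod>j<n. exp (norm a * norm q ^ j))"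
  proof (rule prod_mono, safe)
    fix j
    have "norm (1 - a * q ^ j) \<le> 1 + norm a * norm q ^ j"
      by (metis norm_one norm_power norm_mult norm_triangle_ineq4)
    also have "\<dots> \<le> exp (norm a * norm q ^ j)" by (rule exp_ge_add_one_self[unfolded add.commute[of _ 1]])
    finally show "norm (1 - a * q ^ j) \<le> exp (norm a * norm q ^ j)" .
  qed simp
  also have "\<dots> = exp (\<Sum>j<n. norm a * norm q ^ j)" by (simp add: exp_sum)
  also have "\<dots> \<le> exp (norm a / (1 - norm q))"
  proof -
    have s: "(\<lambda>j. norm a * norm q ^ j) sums (norm a * (1 / (1 - norm q)))"
      by (intro sums_mult geometric_sums) (use assms in auto)
    have "(\<Sum>j<n. norm a * norm q ^ j) \<le> norm a * (1 / (1 - norm q))"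
      using sum_le_suminf[OF sums_summable[OF s], of "{..<n}"] sums_unique[OF s] by auto
    then show ?thesis by simp
  qed
  finally show ?thesis .
qed

lemma qpoch_tendsto:
  fixes q :: complex assumes "norm q < 1"
  shows "(\<lambda>n. qpoch a q n) \<longlonglongrightarrow> qpoch_inf a q"
    and "(\<forall>n. qpoch a q n \<noteq> 0) \<Longrightarrow> qpoch_inf a q \<noteq> 0"
proof -
  have "summable (\<lambda>j. norm ((1 - a * q ^ j) - 1))"
  proof -
    have "summable (\<lambda>j. norm a * norm q ^ j)"
      by (intro summable_mult summable_geometric) (use assms in auto)
    then show ?thesis by (simp add: norm_mult norm_power)
  qed
  then have cp: "convergent_prod (\<lambda>j. 1 - a * q ^ j)"
    by (intro abs_convergent_prod_imp_convergent_prod summable_imp_abs_convergent_prod)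
  have "(\<lambda>n. \<Prod>j<Suc n. 1 - a * q ^ j) \<longlonglongrightarrow> qpoch_inf a q"
    using convergent_prod_LIMSEQ[OF cp] unfolding qpoch_inf_def
    by (simp add: lessThan_Suc_atMost)
  then show "(\<lambda>n. qpoch a q n) \<longlonglongrightarrow> qpoch_inf a q"
    unfolding qpoch_def using LIMSEQ_imp_Suc by (subst (asm) filterlim_sequentially_Suc)
  assume nz: "\<forall>n. qpoch a q n \<noteq> 0"
  have "\<And>j. 1 - a * q ^ j \<noteq> 0"
    using nz by (metis mult_eq_0_iff qpoch_Suc)
  then show "qpoch_inf a q \<noteq> 0"
    unfolding qpoch_inf_def by (rule prodinf_nonzero[OF cp])
qed

lemma pos_lower_bound:
  fixes f :: "nat \<Rightarrow> complex"
  assumes "f \<longlonglongrightarrow> L" "L \<noteq> 0" "\<And>n. f n \<noteq> 0"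
  shows "\<exists>\<delta>>0. \<forall>n. \<delta> \<le> norm (f n)"
proof -
  have "\<forall>\<^sub>F n in sequentially. norm L / 2 < norm (f n)"
    using tendsto_norm[OF assms(1)] assms(2)
    by (intro order_tendstoD(1)) auto
  then obtain N where N: "\<And>n. n \<ge> N \<Longrightarrow> norm L / 2 < norm (f n)"
    by (auto simp: eventually_sequentially)
  define \<delta> where "\<delta> = Min (insert (norm L / 2) ((\<lambda>n. norm (f n)) ` {..<N}))"
  have "\<delta> > 0" unfolding \<delta>_def using assms(2,3) by (subst Min_gr_iff) auto
  moreover have "\<delta> \<le> norm (f n)" for n
  proof (cases "n < N")
    case True then show ?thesis unfolding \<delta>_def by (intro Min_le) auto
  next
    case False
    then have "\<delta> \<le> norm L / 2" unfolding \<delta>_def by (intro Min_le) auto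
    with N[of n] False show ?thesis by auto
  qed
  ultimately show ?thesis by blast
qed


definition T :: "complex \<Rightarrow> complex \<Rightarrow> complex \<Rightarrow> complex \<Rightarrow> nat \<Rightarrow> complex" where
  "T a b q C n = qpoch a q n * qpoch b q n / (qpoch q q n * qpoch C q n) * (C / (a * b)) ^ n"

lemma qpoch_q_nz:
  fixes q :: complex assumes "norm q < 1" shows "qpoch q q n \<noteq> 0"
proof -
  have "1 - q * q ^ j \<noteq> 0" for j
  proof
    assume "1 - q * q ^ j = 0"
    then have "norm (q * q ^ j) = 1" by (simp add: right_minus_eq)
    moreover have "norm q * norm q ^ j \<le> norm q * 1"
      using assms by (intro mult_left_mono power_le_one) auto
    ultimately show False using assms by (simp add: norm_mult norm_power)
  qed
  then show ?thesis unfolding qpoch_def by auto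
qed

lemma T_bound:
  fixes q :: complex
  assumes q: "norm q < 1" and c: "\<And>k. qpoch c q k \<noteq> 0"
  shows "\<exists>K. \<forall>N n. norm (T a b q (c * q ^ N) n) \<le> K * norm (c / (a * b)) ^ n * norm q ^ (N * n)"
proof -
  obtain \<delta>c where dc: "\<delta>c > 0" "\<And>n. \<delta>c \<le> norm (qpoch c q n)"
    using pos_lower_bound[OF qpoch_tendsto(1)[OF q] qpoch_tendsto(2)[OF q] c] c by blast
  obtain \<delta>q where dq: "\<delta>q > 0" "\<And>n. \<delta>q \<le> norm (qpoch q q n)"
    using pos_lower_bound[OF qpoch_tendsto(1)[OF q] qpoch_tendsto(2)[OF q] qpoch_q_nz[OF q]] qpoch_q_nz[OF q]
    by blast
  define Pa where "Pa = exp (norm a / (1 - norm q))"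
  define Pb where "Pb = exp (norm b / (1 - norm q))"
  define Pc where "Pc = exp (norm c / (1 - norm q))"
  have Pc: "Pc > 0" unfolding Pc_def by simp
  define K where "K = Pa * Pb / (\<delta>q * (\<delta>c / Pc))"
  show ?thesis
  proof (intro exI allI)
    fix N n
    have low: "\<delta>c / Pc \<le> norm (qpoch (c * q ^ N) q n)"
    proof -
      have e: "qpoch c q (N + n) = qpoch c q N * qpoch (c * q ^ N) q n" by (rule qpoch_add)
      have "norm (qpoch c q N) \<le> Pc" unfolding Pc_def by (rule norm_qpoch_le[OF q])
      have "\<delta>c \<le> norm (qpoch c q N) * norm (qpoch (c * q ^ N) q n)"
        using dc(2)[of "N + n"] e by (simp add: norm_mult)
      also have "\<dots> \<le> Pc * norm (qpoch (c * q ^ N) q n)"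
        by (intro mult_right_mono) (use \<open>norm (qpoch c q N) \<le> Pc\<close> in auto)
      finally show ?thesis using Pc by (simp add: divide_le_eq mult.commute)
    qed
    have "norm (T a b q (c * q ^ N) n) =
        norm (qpoch a q n) * norm (qpoch b q n) / (norm (qpoch q q n) * norm (qpoch (c * q ^ N) q n))
        * (norm (c / (a * b)) ^ n * norm q ^ (N * n))"
    proof -
      have "norm ((c * q ^ N) / (a * b)) ^ n = norm (c / (a * b)) ^ n * norm q ^ (N * n)"
        by (simp add: norm_mult norm_divide norm_power power_mult_distrib power_mult power_divide)
      then show ?thesis unfolding T_def by (simp add: norm_mult norm_divide norm_power)
    qed
    also have "\<dots> \<le> Pa * Pb / (\<delta>q * (\<delta>c / Pc)) * (norm (c / (a * b)) ^ n * norm q ^ (N * n))"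
    proof (intro mult_right_mono frac_le mult_mono)
      show "norm (qpoch a q n) \<le> Pa" unfolding Pa_def by (rule norm_qpoch_le[OF q])
      show "norm (qpoch b q n) \<le> Pb" unfolding Pb_def by (rule norm_qpoch_le[OF q])
    qed (use dq dc Pc low in \<open>auto simp: Pb_def Pa_def\<close>)
    finally show "norm (T a b q (c * q ^ N) n) \<le> K * norm (c / (a * b)) ^ n * norm q ^ (N * n)"
      by (simp add: K_def mult.assoc)
  qed
qed

lemma T_summable_limit:
  fixes q :: complex
  assumes q: "norm q < 1" and c: "\<And>k. qpoch c q k \<noteq> 0" and r: "norm (c / (a * b)) < 1"
  shows "\<And>N. summable (T a b q (c * q ^ N))"
    and "(\<lambda>N. suminf (T a b q (c * q ^ N))) \<longlonglongrightarrow> 1"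
proof -
  obtain K where K: "\<And>N n. norm (T a b q (c * q ^ N) n) \<le> K * norm (c / (a * b)) ^ n * norm q ^ (N * n)"
    using T_bound[OF q c] by blast
  define r where "r = norm (c / (a * b))"
  have r0: "0 \<le> r" "r < 1" using r by (auto simp: r_def)
  have K0: "0 \<le> K" using K[of 0 0] by (auto intro: order_trans[OF norm_ge_zero])
  have geo: "summable (\<lambda>n. K * r ^ n)" using r0 by (intro summable_mult summable_geometric) auto
  have K': "norm (T a b q (c * q ^ N) n) \<le> K * r ^ n" for N n
  proof -
    have "norm q ^ (N * n) \<le> 1" using q by (simp add: power_le_one)
    then have "K * r ^ n * norm q ^ (N * n) \<le> K * r ^ n * 1"
      using K0 r0 by (intro mult_left_mono) auto
    then show ?thesis using K[of N n] by (simp add: r_def)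
  qed
  show sm: "summable (T a b q (c * q ^ N))" for N
    by (rule summable_comparison_test'[OF geo]) (use K' in auto)
  have T0: "T a b q C 0 = 1" for C by (simp add: T_def)
  have bd: "norm (suminf (T a b q (c * q ^ N)) - 1) \<le> K * r / (1 - r) * norm q ^ N" for N
  proof -
    have "suminf (T a b q (c * q ^ N)) - 1 = (\<Sum>n. T a b q (c * q ^ N) (Suc n))"
      using suminf_split_head[OF sm[of N]] T0 by simp
    also have "norm \<dots> \<le> (\<Sum>n. (K * r * norm q ^ N) * r ^ n)"
    proof (rule norm_suminf_le)
      fix n
      have "norm q ^ (N * Suc n) \<le> norm q ^ N"
        using q by (intro power_decreasing) auto
      then have "K * r ^ Suc n * norm q ^ (N * Suc n) \<le> K * r ^ Suc n * norm q ^ N"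
        using K0 r0 by (intro mult_left_mono) auto
      then show "norm (T a b q (c * q ^ N) (Suc n)) \<le> K * r * norm q ^ N * r ^ n"
        using K[of N "Suc n"] by (simp add: r_def mult_ac)
    next
      show "summable (\<lambda>n. K * r * norm q ^ N * r ^ n)"
        using r0 by (intro summable_mult summable_geometric) auto
    qed
    also have "\<dots> = K * r * norm q ^ N * (1 / (1 - r))"
      using r0 by (subst suminf_mult) (auto simp: suminf_geometric)
    finally show ?thesis by simp
  qed
  have "(\<lambda>N. suminf (T a b q (c * q ^ N)) - 1) \<longlonglongrightarrow> 0"
  proof (rule Lim_null_comparison)
    show "\<forall>\<^sub>F N in sequentially. norm (suminf (T a b q (c * q ^ N)) - 1) \<le> K * r / (1 - r) * norm q ^ N"
      using bd by simp
    show "(\<lambda>N. K * r / (1 - r) * norm q ^ N) \<longlonglongrightarrow> 0"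
      using q by (intro tendsto_mult_right_zero LIMSEQ_power_zero) auto
  qed
  then show "(\<lambda>N. suminf (T a b q (c * q ^ N))) \<longlonglongrightarrow> 1"
    using Lim_transform2 tendsto_const by (simp add: LIM_zero_iff)
qed


lemma step_alg:
  assumes "(a::complex) \<noteq> 0" "b \<noteq> 0" and n1: "1 - C * x \<noteq> 0" and n2: "1 - q * x \<noteq> 0" shows
 "(1 - C) * (1 - C / (a * b)) * t - (1 - C / a) * (1 - C / b) * (t * (1 - C) * x / (1 - C * x))
 = (1 - C) * (1 - x) * t - (1 - C) * (1 - q * x) * (t * (1 - a * x) * (1 - b * x) * C / ((1 - q * x) * (1 - C * x) * (a * b)))"
proof -
  have "(1 - q * x) * (t * (1 - a * x) * (1 - b * x) * C / ((1 - q * x) * (1 - C * x) * (a * b)))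
     = t * (1 - a * x) * (1 - b * x) * C / ((1 - C * x) * (a * b))" using n2 by simp
  then show ?thesis using assms by (simp add: mult.assoc divide_simps del: mult_minus_left) (simp add: algebra_simps)
qed

lemma T_step_identity:
  fixes q :: complex
  assumes q: "norm q < 1" and ab: "a \<noteq> 0" "b \<noteq> 0" and C: "\<And>k. qpoch C q k \<noteq> 0"
  shows "(1 - C) * (1 - C / (a * b)) * T a b q C n - (1 - C / a) * (1 - C / b) * T a b q (C * q) n
       = (1 - C) * (1 - q ^ n) * T a b q C n - (1 - C) * (1 - q ^ Suc n) * T a b q C (Suc n)"
proof -
  define x where "x = q ^ n"
  define P where "P = qpoch a q n"
  define Pb where "Pb = qpoch b q n"
  define Qq where "Qq = qpoch q q n"
  define Qc where "Qc = qpoch C q n"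
  define W where "W = (C / (a * b)) ^ n"
  have Qq: "Qq \<noteq> 0" unfolding Qq_def by (rule qpoch_q_nz[OF q])
  have Qc: "Qc \<noteq> 0" unfolding Qc_def by (rule C)
  have C1: "1 - C \<noteq> 0" using C[of 1] by (simp add: qpoch_def)
  have Cx: "1 - C * x \<noteq> 0" using C[of "Suc n"] by (simp add: qpoch_Suc x_def)
  have qx: "1 - q * x \<noteq> 0" using qpoch_q_nz[OF q, of "Suc n"] by (simp add: qpoch_Suc x_def)
  have Qcq: "qpoch (C * q) q n = Qc * (1 - C * x) / (1 - C)"
    using qpoch_Suc_shift[of C q n] qpoch_Suc[of C q n] C1 by (simp add: Qc_def x_def field_simps)
  have T0: "T a b q C n = P * Pb / (Qq * Qc) * W"
    by (simp add: T_def P_def Pb_def Qq_def Qc_def W_def)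
  have T1: "T a b q C (Suc n) = P * (1 - a * x) * (Pb * (1 - b * x)) / (Qq * (1 - q * x) * (Qc * (1 - C * x))) * (W * (C / (a * b)))"
    by (simp add: T_def P_def Pb_def Qq_def Qc_def W_def qpoch_Suc x_def mult_ac)
  have T1': "T a b q C (Suc n) = T a b q C n * (1 - a * x) * (1 - b * x) * C / ((1 - q * x) * (1 - C * x) * (a * b))"
    unfolding T1 T0 using Qq Qc qx Cx ab by (simp add: field_simps)
  have Tq: "T a b q (C * q) n = P * Pb / (Qq * (Qc * (1 - C * x) / (1 - C))) * (W * x)"
    by (simp add: T_def Qcq P_def Pb_def Qq_def W_def x_def power_mult_distrib power_divide mult_ac)
  have Tq': "T a b q (C * q) n = T a b q C n * (1 - C) * x / (1 - C * x)"
    unfolding Tq T0 using Qq Qc C1 Cx by (simp add: field_simps)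
  show ?thesis
    unfolding T1' Tq' power_Suc x_def[symmetric]
    by (rule step_alg[OF ab Cx qx])
qed

lemma T_recurrence:
  fixes q :: complex
  assumes q: "norm q < 1" and ab: "a \<noteq> 0" "b \<noteq> 0" and C: "\<And>k. qpoch C q k \<noteq> 0"
    and s1: "summable (T a b q C)" and s2: "summable (T a b q (C * q))"
  shows "(1 - C) * (1 - C / (a * b)) * suminf (T a b q C) = (1 - C / a) * (1 - C / b) * suminf (T a b q (C * q))"
proof -
  define u where "u n = (1 - C) * (1 - q ^ n) * T a b q C n" for n
  have "u \<longlonglongrightarrow> (1 - C) * (1 - 0) * 0"
    unfolding u_def using q
    by (intro tendsto_mult tendsto_const tendsto_diff LIMSEQ_power_zero summable_LIMSEQ_zero[OF s1]) auto
  then have "(\<lambda>n. u n - u (Suc n)) sums (u 0 - 0)" by (intro telescope_sums') simp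
  then have "(\<lambda>n. (1 - C) * (1 - C / (a * b)) * T a b q C n - (1 - C / a) * (1 - C / b) * T a b q (C * q) n) sums 0"
    by (simp add: u_def T_step_identity[OF q ab C])
  then have "(\<Sum>n. (1 - C) * (1 - C / (a * b)) * T a b q C n - (1 - C / a) * (1 - C / b) * T a b q (C * q) n) = 0"
    by (rule sums_unique[symmetric])
  moreover have "(\<Sum>n. (1 - C) * (1 - C / (a * b)) * T a b q C n - (1 - C / a) * (1 - C / b) * T a b q (C * q) n)
     = (1 - C) * (1 - C / (a * b)) * suminf (T a b q C) - (1 - C / a) * (1 - C / b) * suminf (T a b q (C * q))"
    using s1 s2 by (subst suminf_diff[symmetric]) (auto simp: suminf_mult intro: summable_mult)
  ultimately show ?thesis by simp
qed

lemma q_gauss: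
  fixes q :: complex
  assumes q: "norm q < 1" and ab: "a \<noteq> 0" "b \<noteq> 0" and c: "\<And>k. qpoch c q k \<noteq> 0"
    and r: "norm (c / (a * b)) < 1"
  shows "qpoch_inf c q * qpoch_inf (c / (a * b)) q * suminf (T a b q c)
       = qpoch_inf (c / a) q * qpoch_inf (c / b) q"
proof -
  note sm = T_summable_limit(1)[OF q c r] and lim = T_summable_limit(2)[OF q c r]
  have cN: "qpoch (c * q ^ N) q k \<noteq> 0" for N k
    using c[of "N + k"] by (simp add: qpoch_add)
  have it: "qpoch c q N * qpoch (c / (a * b)) q N * suminf (T a b q c)
      = qpoch (c / a) q N * qpoch (c / b) q N * suminf (T a b q (c * q ^ N))" for N
  proof (induction N)
    case 0 then show ?case by simp
  next
    case (Suc N)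
    have rec: "(1 - c * q ^ N) * (1 - c * q ^ N / (a * b)) * suminf (T a b q (c * q ^ N))
      = (1 - c * q ^ N / a) * (1 - c * q ^ N / b) * suminf (T a b q (c * q ^ N * q))"
    proof -
      have e: "c * q ^ Suc N = c * q ^ N * q" by (simp add: mult_ac)
      show ?thesis by (rule T_recurrence[OF q ab cN sm[of N] sm[of "Suc N", unfolded e]])
    qed
    have "qpoch c q (Suc N) * qpoch (c / (a * b)) q (Suc N) * suminf (T a b q c)
       = (1 - c * q ^ N) * (1 - c * q ^ N / (a * b)) * (qpoch c q N * qpoch (c / (a * b)) q N * suminf (T a b q c))"
      by (simp add: qpoch_Suc mult_ac)
    also have "\<dots> = (1 - c * q ^ N) * (1 - c * q ^ N / (a * b)) * (qpoch (c / a) q N * qpoch (c / b) q N * suminf (T a b q (c * q ^ N)))"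
      by (simp add: Suc.IH)
    also have "\<dots> = qpoch (c / a) q N * qpoch (c / b) q N * ((1 - c * q ^ N) * (1 - c * q ^ N / (a * b)) * suminf (T a b q (c * q ^ N)))"
      by (simp add: mult_ac)
    also have "\<dots> = qpoch (c / a) q (Suc N) * qpoch (c / b) q (Suc N) * suminf (T a b q (c * q ^ Suc N))"
      unfolding rec by (simp add: qpoch_Suc mult_ac)
    finally show ?case .
  qed
  have L1: "(\<lambda>N. qpoch c q N * qpoch (c / (a * b)) q N * suminf (T a b q c))
     \<longlonglongrightarrow> qpoch_inf c q * qpoch_inf (c / (a * b)) q * suminf (T a b q c)"
    by (intro tendsto_mult tendsto_const qpoch_tendsto(1)[OF q])
  have L2: "(\<lambda>N. qpoch (c / a) q N * qpoch (c / b) q N * suminf (T a b q (c * q ^ N)))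
     \<longlonglongrightarrow> qpoch_inf (c / a) q * qpoch_inf (c / b) q * 1"
    by (intro tendsto_mult lim qpoch_tendsto(1)[OF q])
  show ?thesis using LIMSEQ_unique[OF L1 L2[folded it]] by simp
qed


definition Fq :: "complex \<Rightarrow> nat \<Rightarrow> nat \<Rightarrow> complex" where
  "Fq q m k = (\<Prod>i<k. (1 - q ^ (m - i)))"

lemma Fq_0[simp]: "Fq q m 0 = 1" by (simp add: Fq_def)
lemma Fq_Suc: "Fq q m (Suc k) = Fq q m k * (1 - q ^ (m - k))" by (simp add: Fq_def)

lemma Fq_zero: "m < k \<Longrightarrow> Fq q m k = 0"
  unfolding Fq_def by (rule prod_zero) (auto intro: bexI[of _ m])

lemma Fq_Suc_Suc: "Fq q (Suc n) (Suc k) = (1 - q ^ Suc n) * Fq q n k"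
  unfolding Fq_def by (subst prod.lessThan_Suc_shift) simp

lemma Fq_core:
  fixes q d :: complex
  assumes "k \<le> n"
  shows "(1 - d * q ^ m) * Fq q m k * q ^ ((m - k) * (n - k))
       = Fq q m k * q ^ ((m - k) * (n - k)) * q ^ (m - k) * (1 - d * q ^ k)
         + Fq q m (Suc k) * q ^ (n - k) * q ^ ((m - Suc k) * (n - k))"
proof (cases "k < m")
  case True
  have e1: "q ^ ((m - k) * (n - k)) = q ^ (n - k) * q ^ ((m - Suc k) * (n - k))"
  proof -
    have "(m - k) * (n - k) = (n - k) + (m - Suc k) * (n - k)" using True
      by (metis Suc_diff_Suc mult_Suc)
    then show ?thesis by (simp add: power_add)
  qed
  have e2: "q ^ (m - k) * q ^ k = q ^ m" using True by (simp add: power_add[symmetric])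
  show ?thesis unfolding Fq_Suc e1 using e2
    by (simp add: algebra_simps)
next
  case False
  then have z: "Fq q m (Suc k) = 0" by (intro Fq_zero) auto
  show ?thesis
  proof (cases "k = m")
    case True then show ?thesis using z by simp
  next
    case False
    with \<open>\<not> k < m\<close> have "Fq q m k = 0" by (intro Fq_zero) auto
    then show ?thesis by (simp add: z)
  qed
qed

lemma Fq_pascal:
  fixes q :: complex
  assumes q: "norm q < 1" and "k \<le> n"
  shows "Fq q (Suc n) (Suc k) / qpoch q q (Suc k) = Fq q n (Suc k) / qpoch q q (Suc k) + q ^ (n - k) * (Fq q n k / qpoch q q k)"
proof -
  have nz: "qpoch q q k \<noteq> 0" "1 - q * q ^ k \<noteq> 0"
    using qpoch_q_nz[OF q, of k] qpoch_q_nz[OF q, of "Suc k"] by (auto simp: qpoch_Suc)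
  have e: "q ^ (n - k) * q ^ k = q ^ n"
    using assms(2) by (simp add: power_add[symmetric])
  have "Fq q (Suc n) (Suc k) / qpoch q q (Suc k) = (1 - q * q ^ n) * Fq q n k / (qpoch q q k * (1 - q * q ^ k))"
    by (simp add: Fq_Suc_Suc qpoch_Suc)
  moreover have "Fq q n (Suc k) / qpoch q q (Suc k) = Fq q n k * (1 - q ^ (n - k)) / (qpoch q q k * (1 - q * q ^ k))"
    by (simp add: Fq_Suc qpoch_Suc)
  moreover have "(1 - q * q ^ n) * Fq q n k / (qpoch q q k * (1 - q * q ^ k)) = Fq q n k * (1 - q ^ (n - k)) / (qpoch q q k * (1 - q * q ^ k)) + q ^ (n - k) * (Fq q n k / qpoch q q k)"
    using nz e[symmetric] by (simp add: field_simps)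
  ultimately show ?thesis by simp
qed

lemma chu:
  fixes q d :: complex
  assumes q: "norm q < 1"
  shows "qpoch (d * q ^ m) q n = (\<Sum>k\<le>n. Fq q m k * Fq q n k / qpoch q q k * q ^ ((m - k) * (n - k)) * qpoch (d * q ^ k) q (n - k))"
proof (induction n arbitrary: d)
  case 0 then show ?case by simp
next
  case (Suc n)
  define \<alpha> where "\<alpha> k = Fq q m k * (Fq q n k / qpoch q q k) * q ^ ((m - k) * (Suc n - k)) * qpoch (d * q ^ k) q (Suc n - k)" for k
  define \<beta> where "\<beta> k = Fq q m (Suc k) * (q ^ (n - k) * (Fq q n k / qpoch q q k)) * q ^ ((m - Suc k) * (Suc n - Suc k)) * qpoch (d * q ^ Suc k) q (Suc n - Suc k)" for k
  have "qpoch (d * q ^ m) q (Suc n) = (1 - d * q ^ m) * qpoch ((d * q) * q ^ m) q n"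
    by (simp add: qpoch_Suc_shift mult_ac)
  also have "\<dots> = (\<Sum>k\<le>n. (1 - d * q ^ m) * (Fq q m k * Fq q n k / qpoch q q k * q ^ ((m - k) * (n - k)) * qpoch (d * q * q ^ k) q (n - k)))"
    by (simp add: Suc.IH sum_distrib_left)
  also have "\<dots> = (\<Sum>k\<le>n. \<alpha> k + \<beta> k)"
  proof (rule sum.cong[OF refl])
    fix k assume "k \<in> {..n}"
    then have kn: "k \<le> n" by simp
    have s: "Suc n - k = Suc (n - k)" using kn by simp
    have p: "qpoch (d * q ^ k) q (Suc (n - k)) = (1 - d * q ^ k) * qpoch (d * q * q ^ k) q (n - k)"
      by (simp add: qpoch_Suc_shift mult_ac)
    have ex: "q ^ ((m - k) * Suc (n - k)) = q ^ ((m - k) * (n - k)) * q ^ (m - k)"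
      by (simp add: power_add[symmetric] mult_Suc_right add.commute)
    have p2: "d * q ^ Suc k = d * q * q ^ k" by (simp add: mult_ac)
    define X where "X = Fq q n k / qpoch q q k * qpoch (d * q * q ^ k) q (n - k)"
    have "(1 - d * q ^ m) * (Fq q m k * Fq q n k / qpoch q q k * q ^ ((m - k) * (n - k)) * qpoch (d * q * q ^ k) q (n - k))
        = ((1 - d * q ^ m) * Fq q m k * q ^ ((m - k) * (n - k))) * X"
      by (simp add: X_def)
    also have "\<dots> = (Fq q m k * q ^ ((m - k) * (n - k)) * q ^ (m - k) * (1 - d * q ^ k)
         + Fq q m (Suc k) * q ^ (n - k) * q ^ ((m - Suc k) * (n - k))) * X"
      by (simp only: Fq_core[OF kn])
    also have "\<dots> = \<alpha> k + \<beta> k"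
      unfolding \<alpha>_def \<beta>_def s p ex p2 X_def by (simp add: algebra_simps) (simp add: diff_divide_distrib)
    finally show "(1 - d * q ^ m) * (Fq q m k * Fq q n k / qpoch q q k * q ^ ((m - k) * (n - k)) * qpoch (d * q * q ^ k) q (n - k)) = \<alpha> k + \<beta> k" .
  qed
  also have "\<dots> = (\<Sum>k\<le>Suc n. \<alpha> k) + (\<Sum>k\<le>n. \<beta> k)"
    by (simp add: sum.distrib \<alpha>_def Fq_zero)
  also have "(\<Sum>k\<le>Suc n. \<alpha> k) = \<alpha> 0 + (\<Sum>k\<le>n. \<alpha> (Suc k))"
    by (rule sum.atMost_Suc_shift)
  also have "\<alpha> 0 + (\<Sum>k\<le>n. \<alpha> (Suc k)) + (\<Sum>k\<le>n. \<beta> k) = \<alpha> 0 + (\<Sum>k\<le>n. \<alpha> (Suc k) + \<beta> k)"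
    by (simp add: sum.distrib)
  also have "\<dots> = (\<Sum>k\<le>Suc n. Fq q m k * Fq q (Suc n) k / qpoch q q k * q ^ ((m - k) * (Suc n - k)) * qpoch (d * q ^ k) q (Suc n - k))"
  proof -
    have "\<alpha> (Suc k) + \<beta> k = Fq q m (Suc k) * Fq q (Suc n) (Suc k) / qpoch q q (Suc k) * q ^ ((m - Suc k) * (Suc n - Suc k)) * qpoch (d * q ^ Suc k) q (Suc n - Suc k)"
      if "k \<le> n" for k
    proof -
      have "Fq q m (Suc k) * Fq q (Suc n) (Suc k) / qpoch q q (Suc k) = Fq q m (Suc k) * (Fq q (Suc n) (Suc k) / qpoch q q (Suc k))"
        by simp
      also have "\<dots> = Fq q m (Suc k) * (Fq q n (Suc k) / qpoch q q (Suc k) + q ^ (n - k) * (Fq q n k / qpoch q q k))"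
        by (simp only: Fq_pascal[OF q that])
      finally show ?thesis unfolding \<alpha>_def \<beta>_def by (simp add: algebra_simps)
    qed
    then have "(\<Sum>k\<le>n. \<alpha> (Suc k) + \<beta> k) = (\<Sum>k\<le>n. Fq q m (Suc k) * Fq q (Suc n) (Suc k) / qpoch q q (Suc k) * q ^ ((m - Suc k) * (Suc n - Suc k)) * qpoch (d * q ^ Suc k) q (Suc n - Suc k))"
      by (intro sum.cong) auto
    moreover have "\<alpha> 0 = Fq q m 0 * Fq q (Suc n) 0 / qpoch q q 0 * q ^ ((m - 0) * (Suc n - 0)) * qpoch (d * q ^ 0) q (Suc n - 0)"
      by (simp add: \<alpha>_def)
    ultimately show ?thesis by (simp only: sum.atMost_Suc_shift[of _ "n"])
  qed
  finally show ?case .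
qed


lemma qpoch_inf_split:
  fixes q :: complex assumes q: "norm q < 1"
  shows "qpoch_inf x q = qpoch x q k * qpoch_inf (x * q ^ k) q"
proof -
  have "(\<lambda>n. qpoch x q (n + k)) \<longlonglongrightarrow> qpoch_inf x q"
    using qpoch_tendsto(1)[OF q] by (rule LIMSEQ_ignore_initial_segment)
  moreover have "(\<lambda>n. qpoch x q (n + k)) = (\<lambda>n. qpoch x q k * qpoch (x * q ^ k) q n)"
    using qpoch_add[of x q k] by (simp add: add.commute)
  moreover have "(\<lambda>n. qpoch x q k * qpoch (x * q ^ k) q n) \<longlonglongrightarrow> qpoch x q k * qpoch_inf (x * q ^ k) q"
    by (intro tendsto_mult tendsto_const qpoch_tendsto(1)[OF q])
  ultimately show ?thesis using LIMSEQ_unique by metis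
qed

definition P0 :: "complex \<Rightarrow> nat \<Rightarrow> complex" where "P0 q k = (\<Prod>i<k. q ^ i)"

lemma P0_Suc: "P0 q (Suc k) = P0 q k * q ^ k" by (simp add: P0_def)
lemma P0_nz: "q \<noteq> 0 \<Longrightarrow> P0 q k \<noteq> 0" by (simp add: P0_def)

lemma R1:
  fixes q x :: complex assumes "q \<noteq> 0" "x \<noteq> 0"
  shows "qpoch (x / q ^ k) q k * (P0 q k * q ^ k) = (-x) ^ k * qpoch (q / x) q k"
proof (induction k)
  case 0 then show ?case by (simp add: P0_def)
next
  case (Suc k)
  have sh: "x / q ^ Suc k * q = x / q ^ k" using assms by simp
  have "qpoch (x / q ^ Suc k) q (Suc k) * (P0 q (Suc k) * q ^ Suc k)
      = ((1 - x / q ^ Suc k) * q ^ Suc k) * (qpoch (x / q ^ k) q k * (P0 q k * q ^ k))"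
    unfolding qpoch_Suc_shift sh P0_Suc by (simp add: mult_ac)
  also have "\<dots> = ((1 - x / q ^ Suc k) * q ^ Suc k) * ((-x) ^ k * qpoch (q / x) q k)"
    by (simp only: Suc.IH)
  also have "\<dots> = (-x) ^ Suc k * qpoch (q / x) q (Suc k)"
    unfolding qpoch_Suc using assms by (simp add: field_simps)
  finally show ?case .
qed

lemma R2:
  fixes q :: complex assumes "q \<noteq> 0"
  shows "qpoch (1 / q ^ m) q k * q ^ (m * k) = (-1) ^ k * P0 q k * Fq q m k"
proof (induction k)
  case 0 then show ?case by (simp add: P0_def)
next
  case (Suc k)
  have key: "Fq q m k * (q ^ m - q ^ k) = - (q ^ k * Fq q m k * (1 - q ^ (m - k)))"
  proof (cases "k \<le> m")
    case True
    then have "q ^ k * q ^ (m - k) = q ^ m" by (simp add: power_add[symmetric])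
    then show ?thesis by (simp add: algebra_simps)
  next
    case False then show ?thesis by (simp add: Fq_zero)
  qed
  have "qpoch (1 / q ^ m) q (Suc k) * q ^ (m * Suc k) = (qpoch (1 / q ^ m) q k * q ^ (m * k)) * ((1 - q ^ k / q ^ m) * q ^ m)"
    by (simp add: qpoch_Suc power_add mult_ac)
  also have "\<dots> = ((-1) ^ k * P0 q k * Fq q m k) * (q ^ m - q ^ k)"
    using assms by (simp only: Suc.IH) (simp add: field_simps)
  also have "\<dots> = (-1) ^ Suc k * P0 q (Suc k) * Fq q m (Suc k)"
    using key by (simp add: P0_Suc Fq_Suc mult_ac)
  finally show ?case .
qed

lemma Fq_qpoch: "Fq q (l + k) k * qpoch q q l = qpoch q q (l + k)"
proof (induction k)
  case 0 then show ?case by simp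
next
  case (Suc k)
  have "Fq q (l + Suc k) (Suc k) * qpoch q q l = (1 - q ^ Suc (l + k)) * (Fq q (l + k) k * qpoch q q l)"
    by (simp add: Fq_Suc_Suc[of q "l + k" k, simplified] mult_ac)
  also have "\<dots> = qpoch q q (l + Suc k)" by (simp only: Suc.IH) (simp add: qpoch_Suc mult_ac)
  finally show ?case .
qed

lemma qpoch_inv_zero: "q \<noteq> 0 \<Longrightarrow> m < k \<Longrightarrow> qpoch (1 / q ^ m) q k = 0"
  unfolding qpoch_def by (rule prod_zero) (auto intro!: bexI[of _ m])


theorem lemma2p3:
  fixes a b c d q :: complex and m :: nat
  assumes "0 < norm q" "norm q < 1"
    and "a \<noteq> 0" "b \<noteq> 0" "c \<noteq> 0"
    and "\<And>k. qpoch c q k \<noteq> 0"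
    and "\<And>k. qpoch d q k \<noteq> 0"
    and "\<And>k. k \<le> m \<Longrightarrow> qpoch (a * b * q / c) q k \<noteq> 0"
    and "qpoch_inf c q \<noteq> 0" "qpoch_inf (c / (a * b)) q \<noteq> 0"
    and "norm (c * q powi (- int m) / (a * b)) < 1"
  shows "qphi [a, b, d * q ^ m] [c, d] q (c * q powi (- int m) / (a * b)) =
    qpoch_inf (c / a) q * qpoch_inf (c / b) q / (qpoch_inf c q * qpoch_inf (c / (a * b)) q)
    * qphi [a, b, q powi (- int m)] [a * b * q / c, d] q q"
proof -
  note q = assms(2)
  have q0: "q \<noteq> 0" using assms(1) by auto
  note ab = assms(3,4) and c0 = assms(5) and cpoch = assms(6) and dpoch = assms(7)
    and abq = assms(8) and cinf = assms(9) and winf = assms(10)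
  define w where "w = c / (a * b)"
  define z where "z = w / q ^ m"
  have w0: "w \<noteq> 0" using ab c0 by (simp add: w_def)
  have pm: "q powi (- int m) = 1 / q ^ m" by (simp add: power_int_minus divide_inverse)
  have zdef: "c * q powi (- int m) / (a * b) = z" by (simp add: pm z_def w_def)
  have zlt: "norm z < 1" using assms(11) zdef by simp
  define G where "G = qpoch_inf (c / a) q * qpoch_inf (c / b) q / (qpoch_inf c q * qpoch_inf w q)"
  define A where "A n = qpoch a q n * qpoch b q n * qpoch (d * q ^ m) q n / (qpoch q q n * qpoch c q n * qpoch d q n) * z ^ n" for n
  define B where "B k = qpoch a q k * qpoch b q k * qpoch (1 / q ^ m) q k / (qpoch q q k * qpoch (a * b * q / c) q k * qpoch d q k) * q ^ k" for k
  define Y where "Y n k = Fq q m k * Fq q n k / qpoch q q k * q ^ ((m - k) * (n - k)) / qpoch d q k" for n k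
  define E where "E k n = qpoch a q n * qpoch b q n / (qpoch q q n * qpoch c q n) * z ^ n * Y n k" for k n
  define K where "K k = qpoch a q k * qpoch b q k * Fq q m k * z ^ k / (qpoch c q k * qpoch q q k * qpoch d q k)" for k
  have LHS: "qphi [a, b, d * q ^ m] [c, d] q (c * q powi (- int m) / (a * b)) = suminf A"
    unfolding qphi_def zdef A_def by (simp add: mult_ac)
  have RHS: "qphi [a, b, q powi (- int m)] [a * b * q / c, d] q q = suminf B"
    unfolding qphi_def pm B_def by (simp add: mult_ac)
  have A_eq: "A n = (\<Sum>k\<le>m. E k n)" for n
  proof -
    have "qpoch (d * q ^ m) q n / qpoch d q n = (\<Sum>k\<le>n. Y n k)"
    proof -
      have "qpoch (d * q ^ m) q n / qpoch d q n = (\<Sum>k\<le>n. Fq q m k * Fq q n k / qpoch q q k * q ^ ((m - k) * (n - k)) * qpoch (d * q ^ k) q (n - k) / qpoch d q n)"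
        by (subst chu[OF q]) (simp add: sum_divide_distrib)
      also have "\<dots> = (\<Sum>k\<le>n. Y n k)"
      proof (rule sum.cong[OF refl])
        fix k assume "k \<in> {..n}"
        then have "qpoch d q n = qpoch d q k * qpoch (d * q ^ k) q (n - k)"
          using qpoch_add[of d q k "n - k"] by simp
        then show "Fq q m k * Fq q n k / qpoch q q k * q ^ ((m - k) * (n - k)) * qpoch (d * q ^ k) q (n - k) / qpoch d q n = Y n k"
          using dpoch[of n] dpoch[of k] unfolding Y_def by (simp add: field_simps)
      qed
      finally show ?thesis .
    qed
    also have "\<dots> = (\<Sum>k\<le>n + m. Y n k)"
      by (rule sum.mono_neutral_left) (auto simp: Y_def Fq_zero)
    also have "\<dots> = (\<Sum>k\<le>m. Y n k)"
      by (rule sum.mono_neutral_right) (auto simp: Y_def Fq_zero)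
    finally have "qpoch (d * q ^ m) q n / qpoch d q n = (\<Sum>k\<le>m. Y n k)" .
    moreover have "A n = (qpoch a q n * qpoch b q n / (qpoch q q n * qpoch c q n) * z ^ n) * (qpoch (d * q ^ m) q n / qpoch d q n)"
      unfolding A_def by (simp add: mult_ac)
    ultimately show ?thesis
      unfolding E_def by (simp add: sum_distrib_left)
  qed
  have inner: "(\<lambda>n. E k n) sums (G * B k)" if km: "k \<le> m" for k
  proof -
    define a' where "a' = a * q ^ k"
    define b' where "b' = b * q ^ k"
    define c' where "c' = c * q ^ k"
    have a'0: "a' \<noteq> 0" "b' \<noteq> 0" using ab q0 by (auto simp: a'_def b'_def)
    have c'p: "qpoch c' q j \<noteq> 0" for j using cpoch[of "k + j"] by (simp add: qpoch_add c'_def)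
    have w': "c' / (a' * b') = w / q ^ k" using q0 by (simp add: a'_def b'_def c'_def w_def field_simps power2_eq_square)
    have r': "norm (c' / (a' * b')) < 1"
    proof -
      have "norm q ^ k \<ge> norm q ^ m" using km q by (intro power_decreasing) auto
      then have "norm w / norm q ^ k \<le> norm w / norm q ^ m"
        using q0 by (intro divide_left_mono) auto
      then show ?thesis using zlt unfolding w' z_def by (simp add: norm_divide norm_power)
    qed
    have gauss: "qpoch_inf c' q * qpoch_inf (w / q ^ k) q * suminf (T a' b' q c')
       = qpoch_inf (c / a) q * qpoch_inf (c / b) q"
    proof -
      have "c' / a' = c / a" "c' / b' = c / b" using q0 by (auto simp: a'_def b'_def c'_def)
      then show ?thesis using q_gauss[OF q a'0 c'p r'] unfolding w' by simp
    qed
    have sT: "summable (T a' b' q c')" using T_summable_limit(1)[OF q c'p r', of 0] by simp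
    have Eshift: "E k (l + k) = K k * T a' b' q c' l" for l
    proof -
      have e1: "qpoch a q (l + k) = qpoch a q k * qpoch a' q l" unfolding a'_def using qpoch_add[of a q k l] by (simp add: add.commute)
      have e2: "qpoch b q (l + k) = qpoch b q k * qpoch b' q l" unfolding b'_def using qpoch_add[of b q k l] by (simp add: add.commute)
      have e3: "qpoch c q (l + k) = qpoch c q k * qpoch c' q l" unfolding c'_def using qpoch_add[of c q k l] by (simp add: add.commute)
      have e4: "Fq q (l + k) k / qpoch q q (l + k) = 1 / qpoch q q l"
        using Fq_qpoch[of q l k] qpoch_q_nz[OF q, of l] qpoch_q_nz[OF q, of "l + k"]
        by (simp add: field_simps)
      have e5: "z ^ (l + k) * q ^ ((m - k) * (l + k - k)) = z ^ k * (c' / (a' * b')) ^ l"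
      proof -
        have "z * q ^ (m - k) = w / q ^ k"
          using km q0 by (simp add: z_def field_simps power_add[symmetric])
        then have "z ^ l * q ^ ((m - k) * l) = (w / q ^ k) ^ l"
          by (metis power_mult power_mult_distrib mult.commute)
        then show ?thesis unfolding w' by (simp add: power_add mult_ac)
      qed
      have "E k (l + k) = qpoch a q (l + k) * qpoch b q (l + k) / (qpoch q q (l + k) * qpoch c q (l + k))
            * Fq q m k * Fq q (l + k) k / qpoch q q k / qpoch d q k * (z ^ (l + k) * q ^ ((m - k) * (l + k - k)))"
        unfolding E_def Y_def by (simp add: mult_ac)
      also have "\<dots> = qpoch a q (l + k) * qpoch b q (l + k) / qpoch c q (l + k)
            * Fq q m k * (Fq q (l + k) k / qpoch q q (l + k)) / qpoch q q k / qpoch d q k * (z ^ (l + k) * q ^ ((m - k) * (l + k - k)))"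
        by (simp add: field_simps)
      also have "\<dots> = K k * T a' b' q c' l"
        unfolding e1 e2 e3 e4 e5 K_def T_def using cpoch[of k] c'p[of l]
        by (simp add: field_simps)
      finally show ?thesis .
    qed
    have Ezero: "E k n = 0" if "n < k" for n
      using that by (simp add: E_def Y_def Fq_zero)
    have s1: "(\<lambda>l. E k (l + k)) sums (K k * suminf (T a' b' q c'))"
      unfolding Eshift by (intro sums_mult summable_sums sT)
    have s2: "(\<lambda>n. E k n) sums (K k * suminf (T a' b' q c'))"
    proof -
      have "(\<lambda>n. E k n) sums (K k * suminf (T a' b' q c') + (\<Sum>i<k. E k i))"
        using s1 by (simp only: sums_iff_shift)
      then show ?thesis using Ezero by simp
    qed
    have cinf_split: "qpoch_inf c q = qpoch c q k * qpoch_inf c' q"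
      unfolding c'_def by (rule qpoch_inf_split[OF q])
    have winf_split: "qpoch_inf (w / q ^ k) q = qpoch (w / q ^ k) q k * qpoch_inf w q"
      using qpoch_inf_split[OF q, of "w / q ^ k" k] q0 by simp
    have R1k: "qpoch (w / q ^ k) q k * (P0 q k * q ^ k) = (-w) ^ k * qpoch (a * b * q / c) q k"
    proof -
      have "q / w = a * b * q / c" using ab c0 by (simp add: w_def)
      then show ?thesis using R1[OF q0 w0, of k] by simp
    qed
    have R2k: "qpoch (1 / q ^ m) q k * q ^ (m * k) = (-1) ^ k * P0 q k * Fq q m k"
      by (rule R2[OF q0])
    have wk0: "qpoch (w / q ^ k) q k \<noteq> 0"
      using R1k abq[OF km] w0 by (auto simp: P0_nz q0)
    have c'inf0: "qpoch_inf c' q \<noteq> 0" using cinf cinf_split by auto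
    have Ginf: "qpoch_inf c' q * qpoch_inf (w / q ^ k) q \<noteq> 0"
      using cinf winf cinf_split winf_split wk0 by (auto simp: w_def)
    have S: "suminf (T a' b' q c') = G * qpoch c q k / qpoch (w / q ^ k) q k"
    proof -
      have "suminf (T a' b' q c') = qpoch_inf (c / a) q * qpoch_inf (c / b) q / (qpoch_inf c' q * qpoch_inf (w / q ^ k) q)"
        using gauss Ginf by (simp add: field_simps)
      also have "\<dots> = G * qpoch c q k / qpoch (w / q ^ k) q k"
        unfolding G_def cinf_split winf_split using cpoch[of k] wk0 winf c'inf0
        by (simp add: field_simps w_def)
      finally show ?thesis .
    qed
    have KB: "K k * (G * qpoch c q k / qpoch (w / q ^ k) q k) = G * B k"
    proof -
      have qk: "qpoch (w / q ^ k) q k = (-w) ^ k * qpoch (a * b * q / c) q k / (P0 q k * q ^ k)"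
        using R1k P0_nz[OF q0, of k] q0 by (simp add: field_simps)
      have qm: "qpoch (1 / q ^ m) q k = (-1) ^ k * P0 q k * Fq q m k / q ^ (m * k)"
        using R2k q0 by (simp add: field_simps)
      have zk: "z ^ k = w ^ k / q ^ (m * k)" by (simp only: z_def power_divide power_mult)
      have m1: "(-w) ^ k = (-1) ^ k * w ^ k" by (rule power_minus)
      show ?thesis
        unfolding K_def B_def qk qm zk m1
        using cpoch[of k] dpoch[of k] abq[OF km] qpoch_q_nz[OF q, of k] P0_nz[OF q0, of k] q0 w0
        by (simp add: field_simps)
    qed
    show ?thesis using s2 unfolding S KB .
  qed
  have "suminf A = (\<Sum>n. \<Sum>k\<le>m. E k n)" unfolding A_eq ..
  also have "\<dots> = (\<Sum>k\<le>m. \<Sum>n. E k n)"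
    by (rule suminf_sum) (use inner in \<open>auto intro: sums_summable\<close>)
  also have "\<dots> = (\<Sum>k\<le>m. G * B k)"
    by (rule sum.cong[OF refl]) (use inner in \<open>auto intro: sums_unique[symmetric]\<close>)
  also have "\<dots> = G * suminf B"
  proof -
    have "suminf B = (\<Sum>k\<le>m. B k)"
      by (rule suminf_finite) (auto simp: B_def qpoch_inv_zero[OF q0])
    then show ?thesis by (simp add: sum_distrib_left)
  qed
  finally show ?thesis unfolding LHS RHS G_def w_def .
qed

end
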